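(* Let $\Omega$ be a nonempty set, $\mathcal A$ an algebra on $\Omega$, and $\mathcal X_{\mathcal A}$ the set of bounded $\mathcal A$-measurable functions $\Omega\to\mathbb R$ (constants $c\in\mathbb R$ are identified with constant functions). Let $\preceq$ be a total preorder on $\mathcal X_{\mathcal A}$ that is increasing, i.e. $0\prec 1$, and that can be numerically represented, i.e. there exists $\mathcal R:\mathcal X_{\mathcal A}\to\mathbb R$ with $X\preceq Y$ if and only if $\mathcal R(X)\le\mathcal R(Y)$. Then the following are equivalent: (i) for all $X,Y\in\mathcal X_{\mathcal A}$ and all increasing continuous $\phi:\mathbb R\to\mathbb R$, $X\preceq Y$ implies $\phi(X)\preceq\phi(Y)$; (ii) there exists a numerical representation $\mathcal R$ of $\preceq$ satisfying ordinality, i.e. $\mathcal R(\phi\circ X)=\phi(\mathcal R(X))$ for all $X\in\mathcal X_{\mathcal A}$ and all increasing continuous $\phi:\mathbb R\to\mathbb R$.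
   Context: A total preorder is a transitive and complete binary relation; $\prec$ denotes its strict part. A function $X$ is $\mathcal A$-measurable if $\{X>x\}\in\mathcal A$ and $\{X\ge x\}\in\mathcal A$ for all $x\in\mathbb R$. "Increasing" means non-strictly increasing. *)

theory Defs
  imports "HOL-Analysis.Analysis"
begin

text \<open>The nonempty ground set Omega is modelled by the (automatically nonempty) type 'a,
  i.e. Omega = UNIV; the algebra A is an algebra on UNIV.\<close>

definition A_measurable :: "'a set set \<Rightarrow> ('a \<Rightarrow> real) \<Rightarrow> bool" where
  "A_measurable A X \<longleftrightarrow> (\<forall>x::real. {\<omega>. X \<omega> > x} \<in> A \<and> {\<omega>. X \<omega> \<ge> x} \<in> A)"

definition bdd_meas :: "'a set set \<Rightarrow> ('a \<Rightarrow> real) set" where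
  "bdd_meas A = {X. (\<exists>M. \<forall>\<omega>. \<bar>X \<omega>\<bar> \<le> M) \<and> A_measurable A X}"

definition total_preorder_on :: "'b set \<Rightarrow> ('b \<Rightarrow> 'b \<Rightarrow> bool) \<Rightarrow> bool" where
  "total_preorder_on S le \<longleftrightarrow>
     (\<forall>x\<in>S. \<forall>y\<in>S. \<forall>z\<in>S. le x y \<longrightarrow> le y z \<longrightarrow> le x z) \<and>
     (\<forall>x\<in>S. \<forall>y\<in>S. le x y \<or> le y x)"

definition strict_part :: "('b \<Rightarrow> 'b \<Rightarrow> bool) \<Rightarrow> 'b \<Rightarrow> 'b \<Rightarrow> bool" where
  "strict_part le x y \<longleftrightarrow> le x y \<and> \<not> le y x"

definition num_rep :: "('b \<Rightarrow> real) set \<Rightarrow> (('b \<Rightarrow> real) \<Rightarrow> ('b \<Rightarrow> real) \<Rightarrow> bool)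
    \<Rightarrow> (('b \<Rightarrow> real) \<Rightarrow> real) \<Rightarrow> bool" where
  "num_rep S le R \<longleftrightarrow> (\<forall>X\<in>S. \<forall>Y\<in>S. le X Y \<longleftrightarrow> R X \<le> R Y)"

end

theory Submission
  imports Defs
begin

lemma alg_basic: "algebra UNIV (A::'a set set) \<Longrightarrow> {} \<in> A \<and> UNIV \<in> A"
  by (metis algebra.top algebra.axioms ring_of_sets.axioms semiring_of_sets.empty_sets)

lemma upset_meas:
  fixes X :: "'a \<Rightarrow> real" and U :: "real set"
  assumes alg: "algebra UNIV A" and m: "A_measurable A X"
    and up: "\<And>s t. s \<in> U \<Longrightarrow> s \<le> t \<Longrightarrow> t \<in> U"
  shows "{\<omega>. X \<omega> \<in> U} \<in> A"
proof (cases "U = {}")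
  case True then show ?thesis using alg_basic[OF alg] by simp
next
  case ne: False
  show ?thesis
  proof (cases "U = UNIV")
    case True then show ?thesis using alg_basic[OF alg] by simp
  next
    case False
    then obtain t0 where t0: "t0 \<notin> U" by auto
    have lb: "\<And>u. u \<in> U \<Longrightarrow> t0 < u"
      using up t0 by (metis not_le)
    hence bdd: "bdd_below U" by (meson bdd_below.I less_imp_le)
    define a where "a = Inf U"
    have ge: "\<And>u. u \<in> U \<Longrightarrow> a \<le> u" unfolding a_def using bdd by (simp add: cInf_lower)
    show ?thesis
    proof (cases "a \<in> U")
      case True
      have e: "{\<omega>. X \<omega> \<in> U} = {\<omega>. X \<omega> \<ge> a}" using ge up True by blast
      have "{\<omega>. X \<omega> \<ge> a} \<in> A" using m unfolding A_measurable_def by blast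
      then show ?thesis using e by simp
    next
      case False
      have e: "{\<omega>. X \<omega> \<in> U} = {\<omega>. X \<omega> > a}"
      proof safe
        fix \<omega> assume "X \<omega> \<in> U" then show "a < X \<omega>" using ge False by (metis order_le_less)
      next
        fix \<omega> assume "a < X \<omega>"
        then obtain u where "u \<in> U" "u < X \<omega>" unfolding a_def using cInf_less_iff[OF ne bdd] by blast
        then show "X \<omega> \<in> U" using up by (meson less_imp_le)
      qed
      have "{\<omega>. X \<omega> > a} \<in> A" using m unfolding A_measurable_def by blast
      then show ?thesis using e by simp
    qed
  qed
qed

lemma comp_in:
  assumes alg: "algebra UNIV A" and X: "X \<in> bdd_meas A" and mo: "mono (\<phi>::real\<Rightarrow>real)"
  shows "\<phi> \<circ> X \<in> bdd_meas A"
proof -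
  obtain M where M: "\<And>\<omega>. \<bar>X \<omega>\<bar> \<le> M" and m: "A_measurable A X"
    using X unfolding bdd_meas_def by auto
  have bd: "\<bar>\<phi> (X \<omega>)\<bar> \<le> \<bar>\<phi> (-M)\<bar> + \<bar>\<phi> M\<bar>" for \<omega>
  proof -
    have "-M \<le> X \<omega>" "X \<omega> \<le> M" using M[of \<omega>] by auto
    hence "\<phi> (-M) \<le> \<phi> (X \<omega>)" "\<phi> (X \<omega>) \<le> \<phi> M" using mo monoD by blast+
    thus ?thesis by linarith
  qed
  have meas: "A_measurable A (\<phi> \<circ> X)"
    unfolding A_measurable_def
  proof
    fix x
    have "{\<omega>. X \<omega> \<in> {t. \<phi> t > x}} \<in> A"
      by (rule upset_meas[OF alg m]) (simp, meson mo monoD less_le_trans)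
    moreover have "{\<omega>. X \<omega> \<in> {t. \<phi> t \<ge> x}} \<in> A"
      by (rule upset_meas[OF alg m]) (simp, meson mo monoD order_trans)
    ultimately show "{\<omega>. (\<phi> \<circ> X) \<omega> > x} \<in> A \<and> {\<omega>. (\<phi> \<circ> X) \<omega> \<ge> x} \<in> A" by simp
  qed
  have "\<forall>\<omega>. \<bar>(\<phi> \<circ> X) \<omega>\<bar> \<le> \<bar>\<phi> (-M)\<bar> + \<bar>\<phi> M\<bar>" using bd by simp
  then show ?thesis using meas unfolding bdd_meas_def by blast
qed

lemma const_in:
  assumes alg: "algebra UNIV A"
  shows "(\<lambda>_. c) \<in> bdd_meas A"
proof -
  have "(\<lambda>_. c) = (\<lambda>_::real. c) \<circ> (\<lambda>_. 0)" by auto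
  moreover have "(\<lambda>_. 0::real) \<in> bdd_meas A"
    unfolding bdd_meas_def A_measurable_def using alg_basic[OF alg] by auto
  ultimately show ?thesis using comp_in[OF alg] by (metis mono_def order_refl)
qed

lemma no_gaps:
  fixes f g :: "real \<Rightarrow> real"
  assumes fg: "\<And>d. f d < g d" and gf: "\<And>d d'. d < d' \<Longrightarrow> g d \<le> f d'"
  shows False
proof -
  have "\<forall>d. \<exists>q. q \<in> \<rat> \<and> f d < q \<and> q < g d" using fg Rats_dense_in_real by blast
  then obtain q where q: "\<And>d. q d \<in> \<rat> \<and> f d < q d \<and> q d < g d" by metis
  have sm: "strict_mono q"
  proof (rule strict_monoI)
    fix d d' :: real assume "d < d'"
    then show "q d < q d'" using q[of d] q[of d'] gf[of d d'] by linarith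
  qed
  hence inj: "inj q" by (rule strict_mono_imp_inj_on)
  have "q ` UNIV \<subseteq> \<rat>" using q by auto
  hence "countable (q ` UNIV)" using countable_rat countable_subset by blast
  hence "countable (UNIV::real set)" using countable_image_inj_on inj by blast
  thus False using uncountable_UNIV_real by blast
qed

theorem proposition2:
  fixes A :: "'a set set"
    and le :: "('a \<Rightarrow> real) \<Rightarrow> ('a \<Rightarrow> real) \<Rightarrow> bool"
  assumes "algebra UNIV A"
    and "total_preorder_on (bdd_meas A) le"
    and "strict_part le (\<lambda>_. 0) (\<lambda>_. 1)"
    and "\<exists>R. num_rep (bdd_meas A) le R"
  shows "(\<forall>X\<in>bdd_meas A. \<forall>Y\<in>bdd_meas A. \<forall>\<phi>::real \<Rightarrow> real.
            mono \<phi> \<and> continuous_on UNIV \<phi> \<longrightarrow> le X Y \<longrightarrow> le (\<phi> \<circ> X) (\<phi> \<circ> Y))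
         \<longleftrightarrow>
         (\<exists>R. num_rep (bdd_meas A) le R \<and>
            (\<forall>X\<in>bdd_meas A. \<forall>\<phi>::real \<Rightarrow> real.
               mono \<phi> \<and> continuous_on UNIV \<phi> \<longrightarrow> R (\<phi> \<circ> X) = \<phi> (R X)))"
proof -
  note alg = assms(1)
  define B where "B = bdd_meas A"
  define k where "k = (\<lambda>c::real. (\<lambda>_::'a. c))"
  obtain R0 where R0: "num_rep B le R0" using assms(4) B_def by auto
  have leR: "\<And>X Y. X\<in>B \<Longrightarrow> Y\<in>B \<Longrightarrow> le X Y \<longleftrightarrow> R0 X \<le> R0 Y"
    using R0 unfolding num_rep_def by auto
  have kB: "\<And>c. k c \<in> B" using const_in[OF alg] unfolding B_def k_def by auto
  have compB: "\<And>X \<phi>. X\<in>B \<Longrightarrow> mono \<phi> \<Longrightarrow> \<phi> \<circ> X \<in> B"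
    using comp_in[OF alg] unfolding B_def by auto
  have kcomp: "\<And>\<phi> c. \<phi> \<circ> k c = k (\<phi> c)" unfolding k_def by auto
  have s01: "R0 (k 0) < R0 (k 1)" using assms(3) leR[OF kB kB] unfolding strict_part_def k_def by auto
  show ?thesis
  proof
    assume H: "\<forall>X\<in>bdd_meas A. \<forall>Y\<in>bdd_meas A. \<forall>\<phi>::real \<Rightarrow> real.
            mono \<phi> \<and> continuous_on UNIV \<phi> \<longrightarrow> le X Y \<longrightarrow> le (\<phi> \<circ> X) (\<phi> \<circ> Y)"
    have H': "R0 (\<phi> \<circ> X) \<le> R0 (\<phi> \<circ> Y)"
      if "X\<in>B" "Y\<in>B" "mono \<phi>" "continuous_on UNIV \<phi>" "R0 X \<le> R0 Y" for X Y \<phi>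
    proof -
      have "le X Y" using leR[OF that(1,2)] that(5) by simp
      hence "le (\<phi> \<circ> X) (\<phi> \<circ> Y)" using H that(1-4) unfolding B_def by blast
      thus ?thesis using leR[OF compB[OF that(1,3)] compB[OF that(2,3)]] by simp
    qed
    have Hiso: "R0 X \<le> R0 Y \<longleftrightarrow> R0 (\<phi> \<circ> X) \<le> R0 (\<phi> \<circ> Y)"
      if "X\<in>B" "Y\<in>B" "mono \<phi>" "continuous_on UNIV \<phi>" "mono \<psi>" "continuous_on UNIV \<psi>"
         "\<And>t. \<psi> (\<phi> t) = t" for X Y \<phi> \<psi>
    proof
      assume "R0 X \<le> R0 Y" thus "R0 (\<phi> \<circ> X) \<le> R0 (\<phi> \<circ> Y)" using H'[OF that(1-4)] by simp
    next
      assume a: "R0 (\<phi> \<circ> X) \<le> R0 (\<phi> \<circ> Y)"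
      have "R0 (\<psi> \<circ> (\<phi> \<circ> X)) \<le> R0 (\<psi> \<circ> (\<phi> \<circ> Y))"
        using H'[OF compB[OF that(1) that(3)] compB[OF that(2) that(3)] that(5) that(6) a] .
      moreover have "\<psi> \<circ> (\<phi> \<circ> Z) = Z" for Z :: "'a \<Rightarrow> real" using that(7) by auto
      ultimately show "R0 X \<le> R0 Y" by simp
    qed
    have kmono: "R0 (k c) < R0 (k d)" if cd: "c < d" for c d
    proof -
      let ?\<phi> = "\<lambda>t. c + (d-c)*t" and ?\<psi> = "\<lambda>t. (t-c)/(d-c)"
      have m1: "mono ?\<phi>" using cd by (auto intro!: monoI mult_left_mono)
      have m2: "mono ?\<psi>" using cd by (auto intro!: monoI divide_right_mono)
      have c1: "continuous_on UNIV ?\<phi>" by (intro continuous_intros)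
      have c2: "continuous_on UNIV ?\<psi>" using cd by (intro continuous_intros) auto
      have inv: "\<And>t. ?\<psi> (?\<phi> t) = t" using cd by (auto simp: field_simps)
      have e1: "R0 (k 0) \<le> R0 (k 1) \<longleftrightarrow> R0 (k c) \<le> R0 (k d)"
        using Hiso[OF kB kB m1 c1 m2 c2 inv, of 0 1] by (simp add: kcomp)
      have e2: "R0 (k 1) \<le> R0 (k 0) \<longleftrightarrow> R0 (k d) \<le> R0 (k c)"
        using Hiso[OF kB kB m1 c1 m2 c2 inv, of 1 0] by (simp add: kcomp)
      show ?thesis using e1 e2 s01 by linarith
    qed
    have kle: "R0 (k c) \<le> R0 (k d) \<longleftrightarrow> c \<le> d" for c d
      using kmono[of c d] kmono[of d c] by (cases c d rule: linorder_cases) auto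
    have keq: "R0 (k c) = R0 (k d) \<longleftrightarrow> c = d" for c d
      using kle[of c d] kle[of d c] by auto
    have transl: "R0 Z \<le> R0 W \<longleftrightarrow> R0 ((\<lambda>t. t+d) \<circ> Z) \<le> R0 ((\<lambda>t. t+d) \<circ> W)"
      if "Z\<in>B" "W\<in>B" for Z W d
      by (rule Hiso[OF that, where \<psi> = "\<lambda>t. t - d"])
         (auto intro!: monoI continuous_intros)
    have lower: "R0 (k c) < R0 X" if X: "X\<in>B" and M: "\<forall>\<omega>. \<bar>X \<omega>\<bar> \<le> M" and c: "c < -M"
      for X M c
    proof (rule ccontr)
      assume "\<not> R0 (k c) < R0 X"
      hence a: "R0 X \<le> R0 (k c)" by simp
      let ?\<phi> = "\<lambda>t. min (max t c) (-M)"
      have m: "mono ?\<phi>" by (auto intro!: monoI)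
      have co: "continuous_on UNIV ?\<phi>" by (intro continuous_intros)
      have e1: "?\<phi> \<circ> X = k (-M)"
      proof
        fix \<omega> have "-M \<le> X \<omega>" using M by (smt (verit))
        thus "(?\<phi> \<circ> X) \<omega> = k (-M) \<omega>" using c unfolding k_def by auto
      qed
      have e2: "?\<phi> \<circ> k c = k c" using c unfolding k_def by auto
      have "R0 (k (-M)) \<le> R0 (k c)" using H'[OF X kB m co a] e1 e2 by simp
      thus False using kle c by auto
    qed
    have upper: "R0 X < R0 (k c)" if X: "X\<in>B" and M: "\<forall>\<omega>. \<bar>X \<omega>\<bar> \<le> M" and c: "c > M"
      for X M c
    proof (rule ccontr)
      assume "\<not> R0 X < R0 (k c)"
      hence a: "R0 (k c) \<le> R0 X" by simp
      let ?\<phi> = "\<lambda>t. max (min t c) M"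
      have m: "mono ?\<phi>" by (auto intro!: monoI)
      have co: "continuous_on UNIV ?\<phi>" by (intro continuous_intros)
      have e1: "?\<phi> \<circ> X = k M"
      proof
        fix \<omega> have "X \<omega> \<le> M" using M by (smt (verit))
        thus "(?\<phi> \<circ> X) \<omega> = k M \<omega>" using c unfolding k_def by auto
      qed
      have e2: "?\<phi> \<circ> k c = k c" using c unfolding k_def by auto
      have "R0 (k c) \<le> R0 (k M)" using H'[OF kB X m co a] e1 e2 by simp
      thus False using kle c by auto
    qed
    have TB: "(\<lambda>t. t+d) \<circ> Z \<in> B" if "Z \<in> B" for Z d
      by (rule compB[OF that]) (auto intro!: monoI)
    have CE: "\<exists>c. R0 X = R0 (k c)" if X: "X\<in>B" for X
    proof (rule ccontr)
      assume nex: "\<not> (\<exists>c. R0 X = R0 (k c))"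
      obtain M where M: "\<forall>\<omega>. \<bar>X \<omega>\<bar> \<le> M" using X unfolding B_def bdd_meas_def by auto
      define L where "L = {c. R0 (k c) \<le> R0 X}"
      have Lne: "-M-1 \<in> L" using lower[OF X M, of "-M-1"] unfolding L_def by simp
      have Lub: "c \<le> M" if cL: "c \<in> L" for c
      proof (rule ccontr)
        assume "\<not> c \<le> M"
        hence "R0 X < R0 (k c)" using upper[OF X M, of c] by simp
        thus False using cL unfolding L_def by simp
      qed
      have bdd: "bdd_above L" using Lub by (meson bdd_above.I)
      have Lne': "L \<noteq> {}" using Lne by auto
      define s where "s = Sup L"
      show False
      proof (cases "s \<in> L")
        case False
        hence Xs: "\<not> R0 (k s) \<le> R0 X" unfolding L_def by simp
        have below: "R0 (k c) \<le> R0 X" if cs: "c < s" for c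
        proof -
          obtain l where "l \<in> L" "c < l" using cs less_cSup_iff[OF Lne' bdd] unfolding s_def by auto
          thus ?thesis using kmono[of c l] unfolding L_def by auto
        qed
        show False
        proof (rule no_gaps[of "\<lambda>d. R0 ((\<lambda>t. t+d) \<circ> X)" "\<lambda>d. R0 (k (s+d))"])
          fix d
          show "R0 ((\<lambda>t. t+d) \<circ> X) < R0 (k (s+d))"
            using transl[OF kB X, of s d] Xs by (simp add: kcomp)
        next
          fix d d' :: real assume "d < d'"
          hence "R0 (k (s+d-d')) \<le> R0 X" using below by simp
          hence "R0 ((\<lambda>t. t+d') \<circ> k (s+d-d')) \<le> R0 ((\<lambda>t. t+d') \<circ> X)"
            using transl[OF kB X] by blast
          thus "R0 (k (s+d)) \<le> R0 ((\<lambda>t. t+d') \<circ> X)" by (simp add: kcomp)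
        qed
      next
        case True
        hence Xs: "R0 (k s) < R0 X" using nex unfolding L_def by (metis mem_Collect_eq order_le_less)
        have above: "R0 X < R0 (k c)" if cs2: "c > s" for c
        proof -
          have "c \<notin> L"
          proof
            assume "c \<in> L"
            hence "c \<le> s" unfolding s_def using cSup_upper bdd by blast
            thus False using cs2 by simp
          qed
          thus ?thesis unfolding L_def by simp
        qed
        show False
        proof (rule no_gaps[of "\<lambda>d. R0 (k (s+d))" "\<lambda>d. R0 ((\<lambda>t. t+d) \<circ> X)"])
          fix d
          show "R0 (k (s+d)) < R0 ((\<lambda>t. t+d) \<circ> X)"
            using transl[OF X kB, of s d] Xs by (simp add: kcomp)
        next
          fix d d' :: real assume "d < d'"
          hence "R0 X \<le> R0 (k (s+d'-d))" using above[of "s+d'-d"] by simp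
          hence "R0 ((\<lambda>t. t+d) \<circ> X) \<le> R0 ((\<lambda>t. t+d) \<circ> k (s+d'-d))"
            using transl[OF X kB] by blast
          thus "R0 ((\<lambda>t. t+d) \<circ> X) \<le> R0 (k (s+d'))" by (simp add: kcomp)
        qed
      qed
    qed
    define R where "R = (\<lambda>X. SOME c. R0 X = R0 (k c))"
    have RX: "R0 X = R0 (k (R X))" if "X \<in> B" for X
      unfolding R_def using someI_ex[OF CE[OF that]] .
    show "\<exists>R. num_rep (bdd_meas A) le R \<and>
            (\<forall>X\<in>bdd_meas A. \<forall>\<phi>::real \<Rightarrow> real.
               mono \<phi> \<and> continuous_on UNIV \<phi> \<longrightarrow> R (\<phi> \<circ> X) = \<phi> (R X))"
    proof (intro exI[of _ R] conjI ballI allI impI)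
      show "num_rep (bdd_meas A) le R"
        unfolding num_rep_def B_def[symmetric]
      proof (intro ballI)
        fix X Y assume XB: "X \<in> B" and YB: "Y \<in> B"
        show "le X Y \<longleftrightarrow> R X \<le> R Y"
          using leR[OF XB YB] RX[OF XB] RX[OF YB] kle[of "R X" "R Y"] by simp
      qed
    next
      fix X and \<phi> :: "real \<Rightarrow> real"
      assume X: "X \<in> bdd_meas A" and p: "mono \<phi> \<and> continuous_on UNIV \<phi>"
      hence XB: "X \<in> B" unfolding B_def by simp
      have p1: "mono \<phi>" and p2: "continuous_on UNIV \<phi>" using p by auto
      have "R0 X \<le> R0 (k (R X))" using RX[OF XB] by simp
      hence i1: "R0 (\<phi> \<circ> X) \<le> R0 (\<phi> \<circ> k (R X))" by (rule H'[OF XB kB p1 p2])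
      have "R0 (k (R X)) \<le> R0 X" using RX[OF XB] by simp
      hence i2: "R0 (\<phi> \<circ> k (R X)) \<le> R0 (\<phi> \<circ> X)" by (rule H'[OF kB XB p1 p2])
      have "R0 (\<phi> \<circ> X) = R0 (k (\<phi> (R X)))" using i1 i2 by (simp add: kcomp)
      moreover have "R0 (\<phi> \<circ> X) = R0 (k (R (\<phi> \<circ> X)))" using RX[OF compB[OF XB p1]] .
      ultimately show "R (\<phi> \<circ> X) = \<phi> (R X)" using keq[of "R (\<phi> \<circ> X)" "\<phi> (R X)"] by simp
    qed
  next
    assume "\<exists>R. num_rep (bdd_meas A) le R \<and>
            (\<forall>X\<in>bdd_meas A. \<forall>\<phi>::real \<Rightarrow> real.
               mono \<phi> \<and> continuous_on UNIV \<phi> \<longrightarrow> R (\<phi> \<circ> X) = \<phi> (R X))"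
    then obtain R where nr: "num_rep B le R"
      and ord: "\<And>X \<phi>. X \<in> B \<Longrightarrow> mono \<phi> \<and> continuous_on UNIV \<phi> \<Longrightarrow> R (\<phi> \<circ> X) = \<phi> (R X)"
      unfolding B_def by blast
    have le2: "\<And>X Y. X\<in>B \<Longrightarrow> Y\<in>B \<Longrightarrow> le X Y \<longleftrightarrow> R X \<le> R Y"
      using nr unfolding num_rep_def by auto
    show "\<forall>X\<in>bdd_meas A. \<forall>Y\<in>bdd_meas A. \<forall>\<phi>::real \<Rightarrow> real.
            mono \<phi> \<and> continuous_on UNIV \<phi> \<longrightarrow> le X Y \<longrightarrow> le (\<phi> \<circ> X) (\<phi> \<circ> Y)"
    proof (intro ballI allI impI)
      fix X Y and \<phi> :: "real \<Rightarrow> real"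
      assume X: "X \<in> bdd_meas A" and Y: "Y \<in> bdd_meas A" and p: "mono \<phi> \<and> continuous_on UNIV \<phi>"
        and l: "le X Y"
      have XB: "X \<in> B" and YB: "Y \<in> B" using X Y B_def by auto
      have "R X \<le> R Y" using le2[OF XB YB] l by simp
      hence "\<phi> (R X) \<le> \<phi> (R Y)" using p by (auto dest: monoD)
      hence "R (\<phi> \<circ> X) \<le> R (\<phi> \<circ> Y)" using ord[OF XB p] ord[OF YB p] by simp
      thus "le (\<phi> \<circ> X) (\<phi> \<circ> Y)" using le2[OF compB[OF XB] compB[OF YB]] p by simp
    qed
  qed
qed

end
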